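(* For every integer $N\ge 0$, let $T(N)$ be the number of tilings of a $3\times 3\times n$ box, $n=N/3$, by $N$ bricks of size $1\times 1\times 3$ (and $0$ if $3\nmid N$). Then, as formal power series, \[ \sum_{N\ge 0} T(N)\,z^N=\frac{1-z^3-2z^6-4z^9+z^{12}-z^{15}+z^{18}-z^{21}}{(1-z^3)(1-2z^3-2z^6-15z^9-17z^{12}-6z^{15}+z^{18}-3z^{21}-z^{27})}. \]
   Context: A tiling of a $k\times m\times n$ box (made of $kmn$ unit cubes) by $a\times b\times c$ bricks is a partition of the box into non-overlapping axis-parallel boxes with integer corner coordinates, each congruent (by an axis-permuting placement) to the $a\times b\times c$ brick; all orientations are allowed. Tilings related by symmetries of the box are counted as distinct. The empty tiling counts once for $N=0$. *)

theory Defs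
  imports Main "HOL-Computational_Algebra.Formal_Power_Series"
begin

type_synonym cell = "nat \<times> nat \<times> nat"

text \<open>The k x m x n box, as the set of its unit cubes (indexed by their lower corners).\<close>
definition box :: "nat \<Rightarrow> nat \<Rightarrow> nat \<Rightarrow> cell set" where
  "box k m n = {0..<k} \<times> {0..<m} \<times> {0..<n}"

definition brick_at :: "cell \<Rightarrow> cell \<Rightarrow> cell set" where
  "brick_at p d = {(x, y, z). fst p \<le> x \<and> x < fst p + fst d
                     \<and> fst (snd p) \<le> y \<and> y < fst (snd p) + fst (snd d)
                     \<and> snd (snd p) \<le> z \<and> z < snd (snd p) + snd (snd d)}"

definition orientations :: "nat \<Rightarrow> nat \<Rightarrow> nat \<Rightarrow> cell set" where
  "orientations a b c = {(a,b,c), (a,c,b), (b,a,c), (b,c,a), (c,a,b), (c,b,a)}"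

definition is_tiling :: "nat \<Rightarrow> nat \<Rightarrow> nat \<Rightarrow> nat \<Rightarrow> nat \<Rightarrow> nat \<Rightarrow> cell set set \<Rightarrow> bool" where
  "is_tiling k m n a b c T \<longleftrightarrow>
     (\<forall>B\<in>T. (\<exists>p d. d \<in> orientations a b c \<and> B = brick_at p d) \<and> B \<subseteq> box k m n)
     \<and> pairwise disjnt T
     \<and> \<Union>T = box k m n"

definition tilings :: "nat \<Rightarrow> nat \<Rightarrow> nat \<Rightarrow> nat \<Rightarrow> nat \<Rightarrow> nat \<Rightarrow> cell set set set" where
  "tilings k m n a b c = {T. is_tiling k m n a b c T}"

definition T333 :: "nat \<Rightarrow> nat" where
  "T333 N = (if 3 dvd N then card (tilings 3 3 (N div 3) 1 1 3) else 0)"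

end

theory Submission
  imports Defs "HOL-Library.Product_Lexorder"
begin

unbundle fps_syntax


definition shape :: "cell set \<Rightarrow> bool" where
  "shape B \<longleftrightarrow> (\<exists>p d. d \<in> orientations 1 1 3 \<and> B = brick_at p d)"
definition tiles :: "cell set \<Rightarrow> cell set set \<Rightarrow> bool" where
  "tiles R T \<longleftrightarrow> (\<forall>B\<in>T. shape B \<and> B \<subseteq> R) \<and> pairwise disjnt T \<and> \<Union>T = R"
definition cnt :: "cell set \<Rightarrow> nat" where
  "cnt R = card {T. tiles R T}"

lemma orient: "orientations 1 1 3 = {(1,1,3),(1,3,1),(3,1,1)}"
  by (auto simp: orientations_def)

lemma mem_brick: "(x,y,z) \<in> brick_at (a,b,c) (d,e,f) \<longleftrightarrow>
   a \<le> x \<and> x < a + d \<and> b \<le> y \<and> y < b + e \<and> c \<le> z \<and> z < c + f"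
  by (simp add: brick_at_def)

lemma corner_in: "d \<in> orientations 1 1 3 \<Longrightarrow> p \<in> brick_at p d"
  by (auto simp: orientations_def brick_at_def)

lemma shape_ne: "shape B \<Longrightarrow> B \<noteq> {}"
  unfolding shape_def using corner_in by blast

lemma tiles_finite: "finite R \<Longrightarrow> finite {T. tiles R T}"
proof -
  assume "finite R"
  have "{T. tiles R T} \<subseteq> Pow (Pow R)" by (auto simp: tiles_def)
  then show ?thesis using \<open>finite R\<close> finite_subset by blast
qed

lemma cnt_empty: "cnt {} = 1"
proof -
  have "{T. tiles {} T} = {{}}"
    by (auto simp: tiles_def dest: shape_ne)
  then show ?thesis by (simp add: cnt_def)
qed

lemma cnt_split:
  assumes fin: "finite R" and c: "c \<in> R"
  shows "cnt R = (\<Sum>B\<in>{B. shape B \<and> c \<in> B \<and> B \<subseteq> R}. cnt (R - B))"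
proof -
  let ?Bs = "{B. shape B \<and> c \<in> B \<and> B \<subseteq> R}"
  let ?A = "\<lambda>B. insert B ` {T. tiles (R - B) T}"
  have notin: "B \<notin> T" if "B \<in> ?Bs" "tiles (R - B) T" for B T
    using that by (auto simp: tiles_def)
  have eq: "{T. tiles R T} = (\<Union>B\<in>?Bs. ?A B)"
  proof (intro equalityI subsetI)
    fix T assume "T \<in> {T. tiles R T}"
    then have t: "tiles R T" by simp
    then obtain B where B: "B \<in> T" "c \<in> B" using c by (auto simp: tiles_def)
    have "tiles (R - B) (T - {B})"
      unfolding tiles_def
    proof (intro conjI)
      show "\<forall>B'\<in>T - {B}. shape B' \<and> B' \<subseteq> R - B"
      proof
        fix B' assume b': "B' \<in> T - {B}"
        then have "disjnt B' B" using t B unfolding tiles_def pairwise_def by blast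
        then show "shape B' \<and> B' \<subseteq> R - B" using t b' unfolding tiles_def disjnt_def by blast
      qed
      show "pairwise disjnt (T - {B})" using t by (auto simp: tiles_def pairwise_def)
      have "\<forall>B'\<in>T - {B}. disjnt B' B" using t B unfolding tiles_def pairwise_def by blast
      then show "\<Union> (T - {B}) = R - B"
        using t B unfolding tiles_def disjnt_def by blast
    qed
    moreover have "B \<in> ?Bs" using t B by (auto simp: tiles_def)
    moreover have "T = insert B (T - {B})" using B by auto
    ultimately show "T \<in> (\<Union>B\<in>?Bs. ?A B)" by blast
  next
    fix T assume "T \<in> (\<Union>B\<in>?Bs. ?A B)"
    then obtain B T' where B: "B \<in> ?Bs" and t: "tiles (R - B) T'" and T: "T = insert B T'" by auto
    have "tiles R T" unfolding tiles_def T
    proof (intro conjI)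
      show "\<forall>B'\<in>insert B T'. shape B' \<and> B' \<subseteq> R" using B t by (auto simp: tiles_def)
      show "pairwise disjnt (insert B T')"
        using B t notin[OF B t] unfolding tiles_def pairwise_insert
        by (auto simp: disjnt_def)
      show "\<Union> (insert B T') = R" using B t by (auto simp: tiles_def)
    qed
    then show "T \<in> {T. tiles R T}" by simp
  qed
  have finB: "finite ?Bs" by (rule finite_subset[of _ "Pow R"]) (use fin in auto)
  have finA: "\<forall>B\<in>?Bs. finite (?A B)" using fin tiles_finite[of "R - _"] by auto
  have disj: "\<forall>B1\<in>?Bs. \<forall>B2\<in>?Bs. B1 \<noteq> B2 \<longrightarrow> ?A B1 \<inter> ?A B2 = {}"
  proof (intro ballI impI)
    fix B1 B2 assume b1: "B1 \<in> ?Bs" and b2: "B2 \<in> ?Bs" and ne: "B1 \<noteq> B2"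
    show "?A B1 \<inter> ?A B2 = {}"
    proof (rule ccontr)
      assume "?A B1 \<inter> ?A B2 \<noteq> {}"
      then obtain T1 T2 where t2: "tiles (R - B2) T2" and e: "insert B1 T1 = insert B2 T2" by auto
      then have "B1 \<in> T2" using ne by blast
      then have "B1 \<subseteq> R - B2" using t2 by (auto simp: tiles_def)
      then show False using b1 b2 by auto
    qed
  qed
  have "cnt R = card (\<Union>B\<in>?Bs. ?A B)" by (simp add: cnt_def eq)
  also have "\<dots> = (\<Sum>B\<in>?Bs. card (?A B))" by (rule card_UN_disjoint[OF finB finA disj])
  also have "\<dots> = (\<Sum>B\<in>?Bs. cnt (R - B))"
  proof (rule sum.cong[OF refl])
    fix B assume b: "B \<in> ?Bs"
    have "inj_on (insert B) {T. tiles (R - B) T}"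
      using notin[OF b] unfolding inj_on_def by (metis insert_ident mem_Collect_eq)
    then show "card (?A B) = cnt (R - B)" by (simp add: card_image cnt_def)
  qed
  finally show ?thesis .
qed



fun up :: "cell \<Rightarrow> cell" where "up (x,y,z) = (x,y,Suc z)"
fun dn :: "cell \<Rightarrow> cell" where "dn (x,y,z) = (x,y,z-1)"

lemma dn_up[simp]: "dn (up c) = c" by (cases c) auto
lemma inj_up: "inj up" by (metis dn_up injI)
lemma up_dn: "c \<in> up ` U \<Longrightarrow> up (dn c) = c" by auto
lemma dn_up_img[simp]: "dn ` up ` S = S" by (simp add: image_image)
lemma up_dn_img: "B \<subseteq> up ` U \<Longrightarrow> up ` dn ` B = B"
  by (auto simp: image_image) (metis image_eqI subsetD up_dn)

lemma up_brick: "up ` brick_at p d = brick_at (up p) d"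
proof -
  obtain a b c where p: "p = (a,b,c)" by (cases p)
  obtain d1 d2 d3 where d: "d = (d1,d2,d3)" by (cases d)
  show ?thesis
  proof (intro equalityI subsetI)
    fix q assume "q \<in> up ` brick_at p d"
    then obtain x y z where "(x,y,z) \<in> brick_at p d" "q = up (x,y,z)" by (metis imageE prod_cases3)
    then show "q \<in> brick_at (up p) d" by (simp add: p d brick_at_def)
  next
    fix q assume q: "q \<in> brick_at (up p) d"
    obtain x y z where qq: "q = (x,y,z)" by (cases q)
    then have "z \<ge> 1" using q by (simp add: p d brick_at_def)
    then have "q = up (x,y,z-1)" using qq by simp
    moreover have "(x,y,z-1) \<in> brick_at p d" using q qq by (auto simp: p d brick_at_def)
    ultimately show "q \<in> up ` brick_at p d" by blast
  qed
qed

lemma shape_up: "shape B \<Longrightarrow> shape (up ` B)"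
  unfolding shape_def using up_brick by metis

lemma shape_dn: assumes "shape B" "B \<subseteq> up ` U" shows "shape (dn ` B)"
proof -
  obtain p d where d: "d \<in> orientations 1 1 3" and B: "B = brick_at p d"
    using assms(1) unfolding shape_def by blast
  have "p \<in> B" using B corner_in[OF d] by simp
  then obtain q where "p = up q" using assms(2) by blast
  then have "dn ` B = brick_at q d" using B up_brick[of q d] dn_up_img by metis
  then show ?thesis using d unfolding shape_def by blast
qed

lemma cnt_up: "cnt (up ` R) = cnt R"
proof -
  have injU: "inj (image up)" using inj_up by (simp add: inj_image_eq_iff inj_on_def)
  then have inj2: "inj (image (image up))" by (simp add: inj_image_eq_iff inj_on_def)
  have eq: "{T. tiles (up ` R) T} = image (image up) ` {T. tiles R T}"
  proof (intro equalityI subsetI)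
    fix T2 assume "T2 \<in> {T. tiles (up ` R) T}"
    then have t: "tiles (up ` R) T2" by simp
    let ?T = "image (image dn) T2"
    have bk: "up ` dn ` B = B" if "B \<in> T2" for B
      using t that up_dn_img[of B R] by (auto simp: tiles_def)
    have "image (image up) ?T = T2"
      using bk by (force simp: image_image)
    moreover have "tiles R ?T"
      unfolding tiles_def
    proof (intro conjI)
      show "\<forall>B\<in>?T. shape B \<and> B \<subseteq> R"
        using t shape_dn by (fastforce simp: tiles_def)
      show "pairwise disjnt ?T"
        unfolding pairwise_def
      proof (intro ballI impI)
        fix B1 B2 assume b1: "B1 \<in> ?T" and b2: "B2 \<in> ?T" and ne: "B1 \<noteq> B2"
        obtain C1 where c1: "C1 \<in> T2" "B1 = dn ` C1" using b1 by blast
        obtain C2 where c2: "C2 \<in> T2" "B2 = dn ` C2" using b2 by blast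
        have "C1 \<noteq> C2" using c1 c2 ne by auto
        then have "disjnt C1 C2" using t c1 c2 by (auto simp: tiles_def pairwise_def)
        then have "disjnt (up ` B1) (up ` B2)" using bk c1 c2 by simp
        then show "disjnt B1 B2" by (simp add: disjnt_def image_Int[OF inj_up, symmetric])
      qed
      show "\<Union>?T = R"
      proof -
        have "\<Union>?T = dn ` \<Union>T2" by auto
        also have "\<dots> = R" using t by (simp add: tiles_def)
        finally show ?thesis .
      qed
    qed
    ultimately show "T2 \<in> image (image up) ` {T. tiles R T}" by blast
  next
    fix T2 assume "T2 \<in> image (image up) ` {T. tiles R T}"
    then obtain T where t: "tiles R T" and T2: "T2 = image (image up) T" by blast
    have "tiles (up ` R) T2"
      unfolding tiles_def T2
    proof (intro conjI)
      show "\<forall>B\<in>image up ` T. shape B \<and> B \<subseteq> up ` R"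
        using t shape_up by (auto simp: tiles_def)
      show "pairwise disjnt (image up ` T)"
        unfolding pairwise_def
      proof (intro ballI impI)
        fix X Y assume x: "X \<in> image up ` T" and y: "Y \<in> image up ` T" and ne: "X \<noteq> Y"
        obtain X' where x': "X' \<in> T" "X = up ` X'" using x by blast
        obtain Y' where y': "Y' \<in> T" "Y = up ` Y'" using y by blast
        have "X' \<noteq> Y'" using ne x' y' by auto
        then have "X' \<inter> Y' = {}" using t x' y' by (auto simp: tiles_def pairwise_def disjnt_def)
        then show "disjnt X Y" using x' y' by (simp add: disjnt_def image_Int[OF inj_up, symmetric])
      qed
      show "\<Union> (image up ` T) = up ` R" using t by (auto simp: tiles_def)
    qed
    then show "T2 \<in> {T. tiles (up ` R) T}" by simp
  qed
  show ?thesis unfolding cnt_def eq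
    by (rule card_image) (use inj2 in \<open>auto intro: inj_on_subset\<close>)
qed



definition L0 :: "cell set" where "L0 = box 3 3 1"
definition narrow :: "cell set \<Rightarrow> bool" where
  "narrow X \<longleftrightarrow> (\<forall>c\<in>X. fst c < 3 \<and> fst (snd c) < 3)"

definition V :: "nat \<Rightarrow> cell set \<Rightarrow> nat" where
  "V n X = (if X \<subseteq> box 3 3 n then cnt (box 3 3 n - X) else 0)"

lemma finite_box: "finite (box k m n)" by (simp add: box_def)

lemma V0: "V 0 X = (if X = {} then 1 else 0)"
  by (auto simp: V_def box_def cnt_empty)

lemma box_Suc: "box 3 3 (Suc n) = L0 \<union> up ` box 3 3 n"
proof (intro equalityI subsetI)
  fix c assume c: "c \<in> box 3 3 (Suc n)"
  obtain x y z where cc: "c = (x,y,z)" by (cases c)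
  show "c \<in> L0 \<union> up ` box 3 3 n"
  proof (cases z)
    case 0 then show ?thesis using c cc by (auto simp: L0_def box_def)
  next
    case (Suc z')
    then have "c = up (x,y,z')" using cc by simp
    moreover have "(x,y,z') \<in> box 3 3 n" using c cc Suc by (auto simp: box_def)
    ultimately show ?thesis by blast
  qed
next
  fix c assume "c \<in> L0 \<union> up ` box 3 3 n"
  then show "c \<in> box 3 3 (Suc n)" by (auto simp: L0_def box_def)
qed

lemma L0_up: "L0 \<inter> up ` S = {}" by (auto simp: L0_def box_def)

lemma aux1: "L \<inter> A = {} \<Longrightarrow> (L \<union> A \<subseteq> L \<union> W) = (A \<subseteq> W)" by blast
lemma aux2: "L \<inter> W = {} \<Longrightarrow> (L \<union> W) - (L \<union> A) = W - A" by blast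

lemma Vfull:
  assumes nar: "narrow X" and full: "L0 \<subseteq> X"
  shows "V (Suc n) X = V n (dn ` (X - L0))"
proof -
  let ?Y = "dn ` (X - L0)"
  have sub: "X - L0 \<subseteq> up ` UNIV"
  proof
    fix c assume c: "c \<in> X - L0"
    obtain x y z where cc: "c = (x,y,z)" by (cases c)
    have "x < 3" "y < 3" using nar c cc by (auto simp: narrow_def)
    then have "z \<noteq> 0" using c cc by (auto simp: L0_def box_def)
    then have "c = up (x,y,z-1)" using cc by simp
    then show "c \<in> up ` UNIV" by blast
  qed
  have upY: "up ` ?Y = X - L0" using up_dn_img[OF sub] .
  have X: "X = L0 \<union> up ` ?Y" using upY full by auto
  have iff: "X \<subseteq> box 3 3 (Suc n) \<longleftrightarrow> ?Y \<subseteq> box 3 3 n"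
  proof -
    have "X \<subseteq> box 3 3 (Suc n) \<longleftrightarrow> up ` ?Y \<subseteq> up ` box 3 3 n"
      unfolding box_Suc by (subst X, rule aux1[OF L0_up])
    also have "\<dots> \<longleftrightarrow> ?Y \<subseteq> box 3 3 n" using inj_up by (simp add: inj_image_subset_iff)
    finally show ?thesis .
  qed
  have diff: "box 3 3 (Suc n) - X = up ` (box 3 3 n - ?Y)"
  proof -
    have "box 3 3 (Suc n) - X = up ` box 3 3 n - up ` ?Y"
      unfolding box_Suc by (subst X, rule aux2[OF L0_up])
    also have "\<dots> = up ` (box 3 3 n - ?Y)" using inj_up by (simp add: image_set_diff)
    finally show ?thesis .
  qed
  show ?thesis unfolding V_def using iff diff cnt_up by simp
qed

fun cands :: "cell \<Rightarrow> (cell \<times> cell) list" where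
  "cands (x,y,z) =
     [((x,y,z),(3,1,1))] @ (if 1 \<le> x then [((x-1,y,z),(3,1,1))] else []) @ (if 2 \<le> x then [((x-2,y,z),(3,1,1))] else []) @
     [((x,y,z),(1,3,1))] @ (if 1 \<le> y then [((x,y-1,z),(1,3,1))] else []) @ (if 2 \<le> y then [((x,y-2,z),(1,3,1))] else []) @
     [((x,y,z),(1,1,3))] @ (if 1 \<le> z then [((x,y,z-1),(1,1,3))] else []) @ (if 2 \<le> z then [((x,y,z-2),(1,1,3))] else [])"

lemma cands_iff: "(d \<in> orientations 1 1 3 \<and> c \<in> brick_at p d) \<longleftrightarrow> (p,d) \<in> set (cands c)"
proof -
  obtain x y z where c: "c = (x,y,z)" by (cases c)
  obtain a b e where p: "p = (a,b,e)" by (cases p)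
  show ?thesis
  proof
    assume h: "d \<in> orientations 1 1 3 \<and> c \<in> brick_at p d"
    then have "d = (3,1,1) \<or> d = (1,3,1) \<or> d = (1,1,3)" by (auto simp: orientations_def)
    then show "(p,d) \<in> set (cands c)"
    proof (elim disjE)
      assume d: "d = (3,1,1)"
      then have "b = y" "e = z" "a \<le> x" "x < a + 3" using h by (auto simp: c p brick_at_def)
      then have "x = a \<or> x = a+1 \<or> x = a+2" by linarith
      then show ?thesis using \<open>b = y\<close> \<open>e = z\<close> by (auto simp: c p d)
    next
      assume d: "d = (1,3,1)"
      then have "a = x" "e = z" "b \<le> y" "y < b + 3" using h by (auto simp: c p brick_at_def)
      then have "y = b \<or> y = b+1 \<or> y = b+2" by linarith
      then show ?thesis using \<open>a = x\<close> \<open>e = z\<close> by (auto simp: c p d)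
    next
      assume d: "d = (1,1,3)"
      then have "a = x" "b = y" "e \<le> z" "z < e + 3" using h by (auto simp: c p brick_at_def)
      then have "z = e \<or> z = e+1 \<or> z = e+2" by linarith
      then show ?thesis using \<open>a = x\<close> \<open>b = y\<close> by (auto simp: c p d)
    qed
  next
    assume "(p,d) \<in> set (cands c)"
    then show "d \<in> orientations 1 1 3 \<and> c \<in> brick_at p d"
      by (auto simp: c p orientations_def brick_at_def split: if_splits)
  qed
qed

lemma cands_distinct: "distinct (cands c)"
  by (cases c) auto

lemma brick_inj:
  assumes "d \<in> orientations 1 1 3" "d' \<in> orientations 1 1 3" "brick_at p d = brick_at p' d'"
  shows "p = p' \<and> d = d'"
proof -
  obtain a b e where p: "p = (a,b,e)" by (cases p)
  obtain a' b' e' where p': "p' = (a',b',e')" by (cases p')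
  have 1: "p \<in> brick_at p' d'" using corner_in[OF assms(1), of p] assms(3) by simp
  have 2: "p' \<in> brick_at p d" using corner_in[OF assms(2), of p'] assms(3) by simp
  have pp: "p = p'" using 1 2 assms(1,2) unfolding p p' orient by (auto simp: brick_at_def)
  have "d = d'"
  proof (rule ccontr)
    assume ne: "d \<noteq> d'"
    have dd: "d = (3,1,1) \<or> d = (1,3,1) \<or> d = (1,1,3)" using assms(1) by (auto simp: orientations_def)
    have dd': "d' = (3,1,1) \<or> d' = (1,3,1) \<or> d' = (1,1,3)" using assms(2) by (auto simp: orientations_def)
    have "\<exists>q. q \<in> brick_at p d \<and> q \<notin> brick_at p d'"
      using dd
    proof (elim disjE)
      assume d: "d = (3,1,1)"
      then have "d' \<noteq> (3,1,1)" using ne by simp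
      then have "(a+2,b,e) \<notin> brick_at p d'" using dd' by (auto simp: p brick_at_def)
      moreover have "(a+2,b,e) \<in> brick_at p d" by (simp add: p d brick_at_def)
      ultimately show ?thesis by blast
    next
      assume d: "d = (1,3,1)"
      then have "d' \<noteq> (1,3,1)" using ne by simp
      then have "(a,b+2,e) \<notin> brick_at p d'" using dd' by (auto simp: p brick_at_def)
      moreover have "(a,b+2,e) \<in> brick_at p d" by (simp add: p d brick_at_def)
      ultimately show ?thesis by blast
    next
      assume d: "d = (1,1,3)"
      then have "d' \<noteq> (1,1,3)" using ne by simp
      then have "(a,b,e+2) \<notin> brick_at p d'" using dd' by (auto simp: p brick_at_def)
      moreover have "(a,b,e+2) \<in> brick_at p d" by (simp add: p d brick_at_def)
      ultimately show ?thesis by blast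
    qed
    then show False using assms(3) pp by simp
  qed
  then show ?thesis using pp by simp
qed

lemma Vstep:
  assumes c0: "c \<in> L0" and cX: "c \<notin> X"
  shows "V (Suc n) X = sum_list (map (\<lambda>pd. V (Suc n) (X \<union> brick_at (fst pd) (snd pd)))
           (filter (\<lambda>pd. brick_at (fst pd) (snd pd) \<inter> X = {}) (cands c)))"
proof (cases "X \<subseteq> box 3 3 (Suc n)")
  case False
  then have "V (Suc n) X = 0" by (simp add: V_def)
  moreover have "\<forall>pd\<in>set (cands c). V (Suc n) (X \<union> brick_at (fst pd) (snd pd)) = 0"
    using False by (auto simp: V_def)
  ultimately show ?thesis by (simp add: sum_list_eq_0_iff)
next
  case True
  let ?bx = "box 3 3 (Suc n)"
  let ?R = "?bx - X"
  let ?B = "\<lambda>pd. brick_at (fst pd) (snd pd)"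
  have cR: "c \<in> ?R" using c0 cX by (auto simp: L0_def box_def)
  have Bs: "{B. shape B \<and> c \<in> B \<and> B \<subseteq> ?R} = ?B ` {pd \<in> set (cands c). ?B pd \<subseteq> ?R}"
  proof (intro equalityI subsetI)
    fix B assume "B \<in> {B. shape B \<and> c \<in> B \<and> B \<subseteq> ?R}"
    then obtain p d where "d \<in> orientations 1 1 3" "B = brick_at p d" "c \<in> B" "B \<subseteq> ?R"
      by (auto simp: shape_def)
    then show "B \<in> ?B ` {pd \<in> set (cands c). ?B pd \<subseteq> ?R}"
      using cands_iff[of d c p] by (auto intro!: image_eqI[of _ _ "(p,d)"])
  next
    fix B assume "B \<in> ?B ` {pd \<in> set (cands c). ?B pd \<subseteq> ?R}"
    then obtain p d where "(p,d) \<in> set (cands c)" "B = brick_at p d" "B \<subseteq> ?R" by auto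
    then show "B \<in> {B. shape B \<and> c \<in> B \<and> B \<subseteq> ?R}"
      using cands_iff[of d c p] unfolding shape_def by blast
  qed
  have inj: "inj_on ?B {pd \<in> set (cands c). ?B pd \<subseteq> ?R}"
    unfolding inj_on_def
  proof (intro ballI impI)
    fix pd pd' assume a: "pd \<in> {pd \<in> set (cands c). ?B pd \<subseteq> ?R}" "pd' \<in> {pd \<in> set (cands c). ?B pd \<subseteq> ?R}"
       and e: "?B pd = ?B pd'"
    have "snd pd \<in> orientations 1 1 3" "snd pd' \<in> orientations 1 1 3"
      using a cands_iff[of "snd pd" c "fst pd"] cands_iff[of "snd pd'" c "fst pd'"] by auto
    then show "pd = pd'" using brick_inj e by (metis prod.collapse)
  qed
  have "V (Suc n) X = cnt ?R" using True by (simp add: V_def)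
  also have "\<dots> = (\<Sum>B\<in>{B. shape B \<and> c \<in> B \<and> B \<subseteq> ?R}. cnt (?R - B))"
    by (rule cnt_split) (use finite_box cR in auto)
  also have "\<dots> = (\<Sum>pd\<in>{pd \<in> set (cands c). ?B pd \<subseteq> ?R}. cnt (?R - ?B pd))"
    unfolding Bs by (rule sum.reindex_cong[OF inj refl refl])
  also have "\<dots> = (\<Sum>pd\<in>set (filter (\<lambda>pd. ?B pd \<subseteq> ?R) (cands c)). cnt (?R - ?B pd))"
    by simp
  also have "\<dots> = sum_list (map (\<lambda>pd. cnt (?R - ?B pd)) (filter (\<lambda>pd. ?B pd \<subseteq> ?R) (cands c)))"
    by (rule sum_list_distinct_conv_sum_set[symmetric]) (simp add: cands_distinct)
  also have "\<dots> = sum_list (map (\<lambda>pd. if ?B pd \<subseteq> ?R then cnt (?R - ?B pd) else 0) (cands c))"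
    by (simp add: sum_list_map_filter')
  also have "\<dots> = sum_list (map (\<lambda>pd. if ?B pd \<inter> X = {} then V (Suc n) (X \<union> ?B pd) else 0) (cands c))"
  proof (rule arg_cong[where f=sum_list], rule map_cong[OF refl])
    fix pd
    have "?B pd \<subseteq> ?R \<longleftrightarrow> ?B pd \<inter> X = {} \<and> X \<union> ?B pd \<subseteq> ?bx" using True by blast
    moreover have "?R - ?B pd = ?bx - (X \<union> ?B pd)" by blast
    ultimately show "(if ?B pd \<subseteq> ?R then cnt (?R - ?B pd) else 0) =
       (if ?B pd \<inter> X = {} then V (Suc n) (X \<union> ?B pd) else 0)"
      by (auto simp: V_def)
  qed
  also have "\<dots> = sum_list (map (\<lambda>pd. V (Suc n) (X \<union> ?B pd)) (filter (\<lambda>pd. ?B pd \<inter> X = {}) (cands c)))"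
    by (simp add: sum_list_map_filter')
  finally show ?thesis .
qed



definition L0list :: "cell list" where
  "L0list = [(0,0,0),(1,0,0),(2,0,0),(0,1,0),(1,1,0),(2,1,0),(0,2,0),(1,2,0),(2,2,0)]"

lemma set_L0list: "set L0list = L0"
proof -
  have a: "{0..<3::nat} = {0,1,2}" by auto
  have b: "{0..<1::nat} = {0}" by auto
  show ?thesis unfolding L0list_def L0_def box_def a b by auto
qed

fun brickL :: "cell \<Rightarrow> cell \<Rightarrow> cell list" where
  "brickL (x,y,z) d = (if d = (3,1,1) then [(x,y,z),(x+1,y,z),(x+2,y,z)]
     else if d = (1,3,1) then [(x,y,z),(x,y+1,z),(x,y+2,z)]
     else [(x,y,z),(x,y,z+1),(x,y,z+2)])"

lemma set_brickL: assumes "d \<in> orientations 1 1 3" shows "set (brickL p d) = brick_at p d"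
proof -
  obtain x y z where p: "p = (x,y,z)" by (cases p)
  have "d = (3,1,1) \<or> d = (1,3,1) \<or> d = (1,1,3)" using assms by (auto simp: orientations_def)
  then show ?thesis
  proof (elim disjE)
    assume d: "d = (3,1,1)"
    show ?thesis
    proof (intro equalityI subsetI)
      fix q assume "q \<in> brick_at p d"
      moreover obtain a b c where "q = (a,b,c)" by (cases q)
      ultimately have "b = y" "c = z" "a = x \<or> a = x+1 \<or> a = x+2" by (auto simp: p d brick_at_def)
      then show "q \<in> set (brickL p d)" using \<open>q = (a,b,c)\<close> by (auto simp: p d)
    qed (auto simp: p d brick_at_def)
  next
    assume d: "d = (1,3,1)"
    show ?thesis
    proof (intro equalityI subsetI)
      fix q assume "q \<in> brick_at p d"
      moreover obtain a b c where "q = (a,b,c)" by (cases q)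
      ultimately have "a = x" "c = z" "b = y \<or> b = y+1 \<or> b = y+2" by (auto simp: p d brick_at_def)
      then show "q \<in> set (brickL p d)" using \<open>q = (a,b,c)\<close> by (auto simp: p d)
    qed (auto simp: p d brick_at_def)
  next
    assume d: "d = (1,1,3)"
    show ?thesis
    proof (intro equalityI subsetI)
      fix q assume "q \<in> brick_at p d"
      moreover obtain a b c where "q = (a,b,c)" by (cases q)
      ultimately have "a = x" "b = y" "c = z \<or> c = z+1 \<or> c = z+2" by (auto simp: p d brick_at_def)
      then show "q \<in> set (brickL p d)" using \<open>q = (a,b,c)\<close> by (auto simp: p d)
    qed (auto simp: p d brick_at_def)
  qed
qed

definition narrowL :: "cell list \<Rightarrow> bool" where
  "narrowL xs = (\<forall>c\<in>set xs. fst c < 3 \<and> fst (snd c) < 3)"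

lemma narrowL_iff: "narrowL xs = narrow (set xs)" by (simp add: narrowL_def narrow_def)

primrec fillc :: "nat \<Rightarrow> cell list \<Rightarrow> cell list list" where
  "fillc 0 X = (case find (\<lambda>c. c \<notin> set X) L0list of
      None \<Rightarrow> [sort (remdups (map dn (filter (\<lambda>c. c \<notin> set L0list) X)))]
    | Some c \<Rightarrow> [])"
| "fillc (Suc f) X = (case find (\<lambda>c. c \<notin> set X) L0list of
      None \<Rightarrow> [sort (remdups (map dn (filter (\<lambda>c. c \<notin> set L0list) X)))]
    | Some c \<Rightarrow>
        concat (map (\<lambda>pd. fillc f (X @ brickL (fst pd) (snd pd)))
          (filter (\<lambda>pd. narrowL (brickL (fst pd) (snd pd)) \<and> (\<forall>b\<in>set (brickL (fst pd) (snd pd)). b \<notin> set X)) (cands c))))"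

declare fillc.simps[simp del]

lemma sum_list_map_concat:
  "sum_list (map g (concat xss)) = sum_list (map (\<lambda>xs. sum_list (map g xs)) xss)"
  by (induction xss) auto

lemma fill_correct:
  "narrow (set X) \<Longrightarrow> card (L0 - set X) \<le> f \<Longrightarrow>
   V (Suc n) (set X) = sum_list (map (\<lambda>t. V n (set t)) (fillc f X))"
proof (induction f arbitrary: X)
  case 0
  then have "L0 \<subseteq> set X" using finite_box by (simp add: L0_def)
  then have fn: "find (\<lambda>c. c \<notin> set X) L0list = None" by (auto simp: find_None_iff set_L0list)
  have "set (sort (remdups (map dn (filter (\<lambda>c. c \<notin> set L0list) X)))) = dn ` (set X - L0)"
    by (auto simp: set_L0list)
  then show ?case using Vfull[OF 0(1) \<open>L0 \<subseteq> set X\<close>] by (simp add: fillc.simps(1)[of X] fn)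
next
  case (Suc f)
  show ?case
  proof (cases "find (\<lambda>c. c \<notin> set X) L0list")
    case None
    then have "L0 \<subseteq> set X" by (auto simp: find_None_iff set_L0list)
    have "set (sort (remdups (map dn (filter (\<lambda>c. c \<notin> set L0list) X)))) = dn ` (set X - L0)"
      by (auto simp: set_L0list)
    then show ?thesis using Vfull[OF Suc(2) \<open>L0 \<subseteq> set X\<close>] by (simp add: fillc.simps(2)[of _ X] None)
  next
    case (Some c)
    then have "c \<in> set L0list \<and> c \<notin> set X" unfolding find_Some_iff by (metis nth_mem)
    then have cL: "c \<in> L0" and cX: "c \<notin> set X" by (auto simp: set_L0list)
    let ?B = "\<lambda>pd. brick_at (fst pd) (snd pd)"
    let ?Q = "\<lambda>pd. narrowL (brickL (fst pd) (snd pd)) \<and> (\<forall>b\<in>set (brickL (fst pd) (snd pd)). b \<notin> set X)"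
    have orl: "snd pd \<in> orientations 1 1 3" "c \<in> ?B pd" if "pd \<in> set (cands c)" for pd
      using cands_iff[of "snd pd" c "fst pd"] that by auto
    have Q: "?Q pd \<longleftrightarrow> narrow (?B pd) \<and> ?B pd \<inter> set X = {}" if "pd \<in> set (cands c)" for pd
      using set_brickL[OF orl(1)[OF that]] by (auto simp: narrowL_iff)
    have "V (Suc n) (set X) = sum_list (map (\<lambda>pd. V (Suc n) (set X \<union> ?B pd))
           (filter (\<lambda>pd. ?B pd \<inter> set X = {}) (cands c)))"
      by (rule Vstep[OF cL cX])
    also have "\<dots> = sum_list (map (\<lambda>pd. if ?B pd \<inter> set X = {} then V (Suc n) (set X \<union> ?B pd) else 0) (cands c))"
      by (simp add: sum_list_map_filter')
    also have "\<dots> = sum_list (map (\<lambda>pd. if ?Q pd then sum_list (map (\<lambda>t. V n (set t)) (fillc f (X @ brickL (fst pd) (snd pd)))) else 0) (cands c))"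
    proof (rule arg_cong[where f=sum_list], rule map_cong[OF refl])
      fix pd assume pd: "pd \<in> set (cands c)"
      have sb: "set (X @ brickL (fst pd) (snd pd)) = set X \<union> ?B pd"
        using set_brickL[OF orl(1)[OF pd]] by simp
      show "(if ?B pd \<inter> set X = {} then V (Suc n) (set X \<union> ?B pd) else 0) =
            (if ?Q pd then sum_list (map (\<lambda>t. V n (set t)) (fillc f (X @ brickL (fst pd) (snd pd)))) else 0)"
      proof (cases "?Q pd")
        case True
        then have nB: "narrow (?B pd)" and dj: "?B pd \<inter> set X = {}" using Q[OF pd] by auto
        have nar: "narrow (set (X @ brickL (fst pd) (snd pd)))" using sb nB Suc(2) by (auto simp: narrow_def)
        have "L0 - set (X @ brickL (fst pd) (snd pd)) \<subseteq> (L0 - set X) - {c}" using sb orl(2)[OF pd] by auto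
        moreover have "c \<in> L0 - set X" using cL cX by simp
        ultimately have "card (L0 - set (X @ brickL (fst pd) (snd pd))) < card (L0 - set X)"
        proof -
          have fin: "finite (L0 - set X)" using finite_box[of 3 3 1] by (simp add: L0_def)
          have "card (L0 - set (X @ brickL (fst pd) (snd pd))) \<le> card ((L0 - set X) - {c})"
            by (rule card_mono) (use fin \<open>L0 - set (X @ brickL (fst pd) (snd pd)) \<subseteq> (L0 - set X) - {c}\<close> in auto)
          also have "\<dots> < card (L0 - set X)" by (rule card_Diff1_less[OF fin \<open>c \<in> L0 - set X\<close>])
          finally show ?thesis .
        qed
        then have cd: "card (L0 - set (X @ brickL (fst pd) (snd pd))) \<le> f" using Suc(3) by simp
        show ?thesis using True dj Suc.IH[OF nar cd] sb by simp
      next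
        case False
        show ?thesis
        proof (cases "?B pd \<inter> set X = {}")
          case True
          then have "\<not> narrow (?B pd)" using False Q[OF pd] by auto
          then have "\<not> (set X \<union> ?B pd \<subseteq> box 3 3 (Suc n))" by (auto simp: narrow_def box_def)
          then have "V (Suc n) (set X \<union> ?B pd) = 0" unfolding V_def by (simp only: if_False)
          then show ?thesis unfolding if_P[OF True] if_not_P[OF False] .
        next
          case F2: False
          show ?thesis unfolding if_not_P[OF F2] if_not_P[OF False] by (rule refl)
        qed
      qed
    qed
    also have "\<dots> = sum_list (map (\<lambda>pd. sum_list (map (\<lambda>t. V n (set t)) (fillc f (X @ brickL (fst pd) (snd pd))))) (filter ?Q (cands c)))"
      by (simp add: sum_list_map_filter')
    also have "\<dots> = sum_list (map (\<lambda>t. V n (set t)) (fillc (Suc f) X))"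
      by (simp add: fillc.simps(2)[of f X] Some sum_list_map_concat o_def)
    finally show ?thesis .
  qed
qed



definition Rch :: "cell list list" where
  "Rch = [[],
  [(0,2,0),(0,2,1),(1,2,0),(1,2,1),(2,2,0),(2,2,1)],
  [(0,1,0),(0,1,1),(1,1,0),(1,1,1),(2,1,0),(2,1,1)],
  [(0,1,0),(0,1,1),(0,2,0),(0,2,1),(1,1,0),(1,1,1),(1,2,0),(1,2,1),(2,1,0),(2,1,1),(2,2,0),(2,2,1)],
  [(2,0,0),(2,0,1),(2,1,0),(2,1,1),(2,2,0),(2,2,1)],
  [(1,0,0),(1,0,1),(1,1,0),(1,1,1),(1,2,0),(1,2,1)],
  [(1,0,0),(1,0,1),(1,1,0),(1,1,1),(1,2,0),(1,2,1),(2,0,0),(2,0,1),(2,1,0),(2,1,1),(2,2,0),(2,2,1)],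
  [(0,0,0),(0,0,1),(0,1,0),(0,1,1),(0,2,0),(0,2,1)],
  [(0,0,0),(0,0,1),(0,1,0),(0,1,1),(0,2,0),(0,2,1),(2,0,0),(2,0,1),(2,1,0),(2,1,1),(2,2,0),(2,2,1)],
  [(0,0,0),(0,0,1),(0,1,0),(0,1,1),(0,2,0),(0,2,1),(1,0,0),(1,0,1),(1,1,0),(1,1,1),(1,2,0),(1,2,1)],
  [(0,0,0),(0,0,1),(1,0,0),(1,0,1),(2,0,0),(2,0,1)],
  [(0,0,0),(0,0,1),(0,2,0),(0,2,1),(1,0,0),(1,0,1),(1,2,0),(1,2,1),(2,0,0),(2,0,1),(2,2,0),(2,2,1)],
  [(0,0,0),(0,0,1),(0,1,0),(0,1,1),(1,0,0),(1,0,1),(1,1,0),(1,1,1),(2,0,0),(2,0,1),(2,1,0),(2,1,1)],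
  [(0,0,0),(0,0,1),(0,1,0),(0,1,1),(0,2,0),(0,2,1),(1,0,0),(1,0,1),(1,1,0),(1,1,1),(1,2,0),(1,2,1),(2,0,0),(2,0,1),(2,1,0),(2,1,1),(2,2,0),(2,2,1)],
  [(0,2,0),(1,2,0),(2,2,0)],
  [(0,1,0),(0,1,1),(0,2,0),(1,1,0),(1,1,1),(1,2,0),(2,1,0),(2,1,1),(2,2,0)],
  [(0,0,0),(0,0,1),(0,2,0),(1,0,0),(1,0,1),(1,2,0),(2,0,0),(2,0,1),(2,2,0)],
  [(0,0,0),(0,0,1),(0,1,0),(0,1,1),(0,2,0),(1,0,0),(1,0,1),(1,1,0),(1,1,1),(1,2,0),(2,0,0),(2,0,1),(2,1,0),(2,1,1),(2,2,0)],
  [(0,1,0),(1,1,0),(2,1,0)],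
  [(0,1,0),(0,2,0),(0,2,1),(1,1,0),(1,2,0),(1,2,1),(2,1,0),(2,2,0),(2,2,1)],
  [(0,0,0),(0,0,1),(0,1,0),(1,0,0),(1,0,1),(1,1,0),(2,0,0),(2,0,1),(2,1,0)],
  [(0,0,0),(0,0,1),(0,1,0),(0,2,0),(0,2,1),(1,0,0),(1,0,1),(1,1,0),(1,2,0),(1,2,1),(2,0,0),(2,0,1),(2,1,0),(2,2,0),(2,2,1)],
  [(0,1,0),(0,2,0),(1,1,0),(1,2,0),(2,1,0),(2,2,0)],
  [(0,0,0),(0,0,1),(0,1,0),(0,2,0),(1,0,0),(1,0,1),(1,1,0),(1,2,0),(2,0,0),(2,0,1),(2,1,0),(2,2,0)],
  [(2,0,0),(2,1,0),(2,2,0)],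
  [(1,0,0),(1,0,1),(1,1,0),(1,1,1),(1,2,0),(1,2,1),(2,0,0),(2,1,0),(2,2,0)],
  [(0,0,0),(0,0,1),(0,1,0),(0,1,1),(0,2,0),(0,2,1),(2,0,0),(2,1,0),(2,2,0)],
  [(0,0,0),(0,0,1),(0,1,0),(0,1,1),(0,2,0),(0,2,1),(1,0,0),(1,0,1),(1,1,0),(1,1,1),(1,2,0),(1,2,1),(2,0,0),(2,1,0),(2,2,0)],
  [(1,0,0),(1,1,0),(1,2,0)],
  [(1,0,0),(1,1,0),(1,2,0),(2,0,0),(2,0,1),(2,1,0),(2,1,1),(2,2,0),(2,2,1)],
  [(0,0,0),(0,0,1),(0,1,0),(0,1,1),(0,2,0),(0,2,1),(1,0,0),(1,1,0),(1,2,0)],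
  [(0,0,0),(0,0,1),(0,1,0),(0,1,1),(0,2,0),(0,2,1),(1,0,0),(1,1,0),(1,2,0),(2,0,0),(2,0,1),(2,1,0),(2,1,1),(2,2,0),(2,2,1)],
  [(1,0,0),(1,1,0),(1,2,0),(2,0,0),(2,1,0),(2,2,0)],
  [(0,0,0),(0,0,1),(0,1,0),(0,1,1),(0,2,0),(0,2,1),(1,0,0),(1,1,0),(1,2,0),(2,0,0),(2,1,0),(2,2,0)],
  [(0,0,0),(0,1,0),(0,2,0)],
  [(0,0,0),(0,1,0),(0,2,0),(2,0,0),(2,0,1),(2,1,0),(2,1,1),(2,2,0),(2,2,1)],
  [(0,0,0),(0,1,0),(0,2,0),(1,0,0),(1,0,1),(1,1,0),(1,1,1),(1,2,0),(1,2,1)],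
  [(0,0,0),(0,1,0),(0,2,0),(1,0,0),(1,0,1),(1,1,0),(1,1,1),(1,2,0),(1,2,1),(2,0,0),(2,0,1),(2,1,0),(2,1,1),(2,2,0),(2,2,1)],
  [(0,0,0),(0,1,0),(0,2,0),(2,0,0),(2,1,0),(2,2,0)],
  [(0,0,0),(0,1,0),(0,2,0),(1,0,0),(1,0,1),(1,1,0),(1,1,1),(1,2,0),(1,2,1),(2,0,0),(2,1,0),(2,2,0)],
  [(0,0,0),(0,1,0),(0,2,0),(1,0,0),(1,1,0),(1,2,0)],
  [(0,0,0),(0,1,0),(0,2,0),(1,0,0),(1,1,0),(1,2,0),(2,0,0),(2,0,1),(2,1,0),(2,1,1),(2,2,0),(2,2,1)],
  [(0,0,0),(1,0,0),(2,0,0)],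
  [(0,0,0),(0,2,0),(0,2,1),(1,0,0),(1,2,0),(1,2,1),(2,0,0),(2,2,0),(2,2,1)],
  [(0,0,0),(0,1,0),(0,1,1),(1,0,0),(1,1,0),(1,1,1),(2,0,0),(2,1,0),(2,1,1)],
  [(0,0,0),(0,1,0),(0,1,1),(0,2,0),(0,2,1),(1,0,0),(1,1,0),(1,1,1),(1,2,0),(1,2,1),(2,0,0),(2,1,0),(2,1,1),(2,2,0),(2,2,1)],
  [(0,0,0),(0,2,0),(1,0,0),(1,2,0),(2,0,0),(2,2,0)],
  [(0,0,0),(0,1,0),(0,1,1),(0,2,0),(1,0,0),(1,1,0),(1,1,1),(1,2,0),(2,0,0),(2,1,0),(2,1,1),(2,2,0)],
  [(0,0,0),(0,1,0),(1,0,0),(1,1,0),(2,0,0),(2,1,0)],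
  [(0,0,0),(0,1,0),(0,2,0),(0,2,1),(1,0,0),(1,1,0),(1,2,0),(1,2,1),(2,0,0),(2,1,0),(2,2,0),(2,2,1)],
  [(0,0,0),(0,1,0),(0,2,0),(1,0,0),(1,1,0),(1,2,0),(2,0,0),(2,1,0),(2,2,0)]]"

definition succIdx :: "nat list list" where
  "succIdx = [[0,1,2,3,0,4,5,6,7,8,9,10,11,12,13],
  [14,15,16,17],
  [18,19,20,21],
  [22,23],
  [24,25,26,27],
  [28,29,30,31],
  [32,33],
  [34,35,36,37],
  [38,39],
  [40,41],
  [42,43,44,45],
  [46,47],
  [48,49],
  [50],
  [0,2,10,12],
  [18,20],
  [42,44],
  [48],
  [0,1,10,11],
  [14,16],
  [42,43],
  [46],
  [0,10],
  [42],
  [0,5,7,9],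
  [28,30],
  [34,36],
  [40],
  [0,4,7,8],
  [24,26],
  [34,35],
  [38],
  [0,7],
  [34],
  [0,4,5,6],
  [24,25],
  [28,29],
  [32],
  [0,5],
  [28],
  [0,4],
  [24],
  [0,1,2,3],
  [14,15],
  [18,19],
  [22],
  [0,2],
  [18],
  [0,1],
  [14],
  [0]]"

definition dd :: "int list" where "dd = [1,-3,0,-13,-2,11,7,-4,3,-1,1]"

primrec wv :: "nat \<Rightarrow> int list" where
  "wv 0 = map (\<lambda>s. if s = [] then 1 else 0) Rch"
| "wv (Suc k) = map (\<lambda>l. sum_list (map ((!) (wv k)) l)) succIdx"

lemma C1: "length Rch = 51 \<and> length succIdx = 51" by code_simp
lemma C3: "\<forall>l\<in>set succIdx. \<forall>j\<in>set l. j < 51" by code_simp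
lemma C4: "\<forall>s\<in>set Rch. narrowL s" by code_simp
lemma C5: "Rch ! 0 = [] \<and> (\<forall>i<51. Rch ! i = [] \<longrightarrow> i = 0)" by code_simp
lemma C7: "map (\<lambda>k. wv k ! 0) [0..<10] = [1, 2, 4, 21, 92, 320, 1213, 4822, 18556, 70929]" by code_simp
lemma C6: "\<forall>i<51. (\<Sum>k<11. dd ! k * (wv (10 - k) ! i)) = 0" by code_simp
lemma C2: "map (fillc 9) Rch = map (map ((!) Rch)) succIdx" by code_simp




definition nn :: "int list" where "nn = [1,-1,-2,-4,1,-1,1,-1]"

definition avals :: "int list" where "avals = [1, 2, 4, 21, 92, 320, 1213, 4822, 18556, 70929]"

lemma C8: "\<forall>q<10. (\<Sum>k<11. if q < k then 0 else dd ! k * (avals ! (q - k))) = (if q < 8 then nn ! q else 0)"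
  by code_simp

lemma wv_avals: "j < 10 \<Longrightarrow> wv j ! 0 = avals ! j"
  using arg_cong[OF C7, of "\<lambda>xs. xs ! j"] by (simp add: avals_def)

lemma card_L0: "card L0 = 9" by (simp add: L0_def box_def card_cartesian_product)

lemma of_nat_sum_list_map: "int (sum_list (map f l)) = sum_list (map (\<lambda>x. int (f x)) l)"
  by (induction l) auto

lemma sum_swap_list:
  "(\<Sum>k\<in>K. (c k :: int) * sum_list (map (g k) l)) = sum_list (map (\<lambda>j. \<Sum>k\<in>K. c k * g k j) l)"
  by (induction l) (auto simp: sum.distrib algebra_simps)

lemma succ_step:
  assumes i: "i < 51"
  shows "V (Suc k) (set (Rch!i)) = sum_list (map (\<lambda>j. V k (set (Rch!j))) (succIdx!i))"
proof -
  have len: "length Rch = 51" "length succIdx = 51" using C1 by auto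
  have "narrowL (Rch!i)" using C4 i len by auto
  then have nar: "narrow (set (Rch!i))" by (simp add: narrowL_iff)
  have "card (L0 - set (Rch!i)) \<le> card L0"
    by (rule card_mono) (auto simp: L0_def finite_box)
  then have cd: "card (L0 - set (Rch!i)) \<le> 9" by (simp add: card_L0)
  have f: "fillc 9 (Rch!i) = map ((!) Rch) (succIdx!i)"
    using arg_cong[OF C2, of "\<lambda>xs. xs ! i"] i len by simp
  show ?thesis using fill_correct[OF nar cd, of k] f by (simp add: o_def)
qed

lemma vecs: "i < 51 \<Longrightarrow> int (V k (set (Rch!i))) = wv k ! i"
proof (induction k arbitrary: i)
  case 0
  have len: "length Rch = 51" using C1 by auto
  show ?case using 0 len by (simp add: V0)
next
  case (Suc k)
  have len: "length Rch = 51" "length succIdx = 51" using C1 by auto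
  have js: "\<forall>j\<in>set (succIdx!i). j < 51" using C3 Suc.prems len by auto
  have "int (V (Suc k) (set (Rch!i))) = sum_list (map (\<lambda>j. int (V k (set (Rch!j)))) (succIdx!i))"
    using succ_step[OF Suc.prems] by (simp add: of_nat_sum_list_map)
  also have "\<dots> = sum_list (map (\<lambda>j. wv k ! j) (succIdx!i))"
    using Suc.IH js by (intro arg_cong[where f=sum_list] map_cong) auto
  also have "\<dots> = wv (Suc k) ! i" using Suc.prems len by simp
  finally show ?case .
qed

lemma recur: "i < 51 \<Longrightarrow> (\<Sum>k<11. dd!k * int (V (n + (10 - k)) (set (Rch!i)))) = 0"
proof (induction n arbitrary: i)
  case 0
  have "(\<Sum>k<11. dd!k * int (V (0 + (10 - k)) (set (Rch!i)))) = (\<Sum>k<11. dd ! k * (wv (10 - k) ! i))"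
    using vecs[OF 0] by simp
  also have "\<dots> = 0" using C6 0 by blast
  finally show ?case .
next
  case (Suc n)
  have len: "length Rch = 51" "length succIdx = 51" using C1 by auto
  have js: "\<forall>j\<in>set (succIdx!i). j < 51" using C3 Suc.prems len by auto
  have "(\<Sum>k<11. dd!k * int (V (Suc n + (10 - k)) (set (Rch!i))))
      = (\<Sum>k<11. dd!k * sum_list (map (\<lambda>j. int (V (n + (10 - k)) (set (Rch!j)))) (succIdx!i)))"
    using succ_step[OF Suc.prems] by (simp add: of_nat_sum_list_map)
  also have "\<dots> = sum_list (map (\<lambda>j. \<Sum>k<11. dd!k * int (V (n + (10 - k)) (set (Rch!j)))) (succIdx!i))"
    by (rule sum_swap_list)
  also have "\<dots> = sum_list (map (\<lambda>j. 0) (succIdx!i))"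
    using Suc.IH js by (intro arg_cong[where f=sum_list] map_cong) auto
  also have "\<dots> = 0" by (induction "succIdx!i") auto
  finally show ?case .
qed

definition a :: "nat \<Rightarrow> nat" where "a n = V n {}"

lemma a_Rch: "a n = V n (set (Rch!0))" using C5 by (simp add: a_def)

lemma conv: "(\<Sum>k<11. if q < k then 0 else dd ! k * int (a (q - k))) = (if q < 8 then nn ! q else 0)"
proof (cases "q < 10")
  case True
  have "(\<Sum>k<11. if q < k then 0 else dd ! k * int (a (q - k))) = (\<Sum>k<11. if q < k then 0 else dd ! k * (avals ! (q - k)))"
    by (rule sum.cong[OF refl]) (use True in \<open>simp add: a_Rch vecs wv_avals\<close>)
  also have "\<dots> = (if q < 8 then nn ! q else 0)" using C8 True by blast
  finally show ?thesis .
next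
  case False
  then obtain n where q: "q = n + 10" by (metis add.commute le_add_diff_inverse not_less)
  have "(\<Sum>k<11. if q < k then 0 else dd ! k * int (a (q - k))) = (\<Sum>k<11. dd!k * int (V (n + (10 - k)) (set (Rch!0))))"
    by (rule sum.cong[OF refl]) (auto simp: q a_Rch)
  also have "\<dots> = 0" by (rule recur) simp
  finally show ?thesis using q by simp
qed

lemma T333_eq: "T333 N = (if 3 dvd N then a (N div 3) else 0)"
proof -
  have "tilings 3 3 m 1 1 3 = {T. tiles (box 3 3 m) T}" for m
    by (auto simp: tilings_def is_tiling_def tiles_def shape_def)
  then show ?thesis by (simp add: T333_def a_def V_def cnt_def)
qed




lemma den_expand: "((1 - fps_X^3) * (1 - 2*fps_X^3 - 2*fps_X^6 - 15*fps_X^9 - 17*fps_X^12 - 6*fps_X^15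
        + fps_X^18 - 3*fps_X^21 - fps_X^27) :: rat fps) =
   1 - 3*fps_X^3 - 13*fps_X^9 - 2*fps_X^12 + 11*fps_X^15 + 7*fps_X^18 - 4*fps_X^21 + 3*fps_X^24 - fps_X^27 + fps_X^30"
  by algebra

lemma hconst: "((f::rat fps) * (fps_const c * g)) $ n = c * ((f * g) $ n)"
proof -
  have "f * (fps_const c * g) = fps_const c * (f * g)" by (simp add: mult_ac)
  show ?thesis unfolding \<open>f * (fps_const c * g) = fps_const c * (f * g)\<close> by (rule fps_mult_left_const_nth)
qed

lemma coef: "((f::rat fps) * (1 - 3*fps_X^3 - 13*fps_X^9 - 2*fps_X^12 + 11*fps_X^15 + 7*fps_X^18 - 4*fps_X^21 + 3*fps_X^24 - fps_X^27 + fps_X^30)) $ N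
  = f$N - 3 * (if N < 3 then 0 else f$(N-3)) - 13 * (if N < 9 then 0 else f$(N-9))
    - 2 * (if N < 12 then 0 else f$(N-12)) + 11 * (if N < 15 then 0 else f$(N-15))
    + 7 * (if N < 18 then 0 else f$(N-18)) - 4 * (if N < 21 then 0 else f$(N-21))
    + 3 * (if N < 24 then 0 else f$(N-24)) - (if N < 27 then 0 else f$(N-27)) + (if N < 30 then 0 else f$(N-30))"
  by (simp add: algebra_simps fps_X_power_mult_right_nth numeral_fps_const hconst)

lemma coef_sum: "((f::rat fps) * (1 - 3*fps_X^3 - 13*fps_X^9 - 2*fps_X^12 + 11*fps_X^15 + 7*fps_X^18 - 4*fps_X^21 + 3*fps_X^24 - fps_X^27 + fps_X^30)) $ N
  = (\<Sum>k<11. of_int (dd!k) * (if N < 3*k then 0 else f$(N-3*k)))"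
  unfolding coef by (simp add: eval_nat_numeral dd_def)

lemma num_coef: "((1 - fps_X^3 - 2*fps_X^6 - 4*fps_X^9 + fps_X^12 - fps_X^15 + fps_X^18 - fps_X^21) :: rat fps) $ N
  = (if N mod 3 = 0 \<and> N div 3 < 8 then of_int (nn ! (N div 3)) else 0)"
proof -
  have "((1 - fps_X^3 - 2*fps_X^6 - 4*fps_X^9 + fps_X^12 - fps_X^15 + fps_X^18 - fps_X^21) :: rat fps) $ N
    = (if N = 0 then 1 else 0) - (if N = 3 then 1 else 0) - 2 * (if N = 6 then 1 else 0) - 4 * (if N = 9 then 1 else 0)
      + (if N = 12 then 1 else 0) - (if N = 15 then 1 else 0) + (if N = 18 then 1 else 0) - (if N = 21 then 1 else 0)"
    by (simp add: numeral_fps_const)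
  also have "\<dots> = (if N mod 3 = 0 \<and> N div 3 < 8 then of_int (nn ! (N div 3)) else 0)"
  proof (cases "N mod 3 = 0 \<and> N div 3 < 8")
    case True
    then obtain q where "N = 3*q" "q < 8" by auto
    then have "q = 0 \<or> q = 1 \<or> q = 2 \<or> q = 3 \<or> q = 4 \<or> q = 5 \<or> q = 6 \<or> q = 7" by linarith
    then show ?thesis using \<open>N = 3*q\<close> by (elim disjE) (simp_all add: nn_def)
  qed auto
  finally show ?thesis .
qed

theorem mainTheorem13:
  shows "Abs_fps (\<lambda>N. of_nat (T333 N) :: rat) =
    (1 - fps_X^3 - 2*fps_X^6 - 4*fps_X^9 + fps_X^12 - fps_X^15 + fps_X^18 - fps_X^21) /
    ((1 - fps_X^3) * (1 - 2*fps_X^3 - 2*fps_X^6 - 15*fps_X^9 - 17*fps_X^12 - 6*fps_X^15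
        + fps_X^18 - 3*fps_X^21 - fps_X^27))"
proof -
  define A where "A = Abs_fps (\<lambda>N. of_nat (T333 N) :: rat)"
  define Num where "Num = (1 - fps_X^3 - 2*fps_X^6 - 4*fps_X^9 + fps_X^12 - fps_X^15 + fps_X^18 - fps_X^21 :: rat fps)"
  define D where "D = (1 - 3*fps_X^3 - 13*fps_X^9 - 2*fps_X^12 + 11*fps_X^15 + 7*fps_X^18 - 4*fps_X^21 + 3*fps_X^24 - fps_X^27 + fps_X^30 :: rat fps)"
  have AD: "A * D = Num"
  proof (rule fps_ext)
    fix N
    have lhs: "(A * D) $ N = (\<Sum>k<11. of_int (dd!k) * (if N < 3*k then 0 else A$(N-3*k)))"
      unfolding D_def by (rule coef_sum)
    have rhs: "Num $ N = (if N mod 3 = 0 \<and> N div 3 < 8 then of_int (nn ! (N div 3)) else 0)"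
      unfolding Num_def by (rule num_coef)
    show "(A * D) $ N = Num $ N"
    proof (cases "N mod 3 = 0")
      case True
      define q where "q = N div 3"
      have N: "N = 3 * q" using True q_def by auto
      have "(\<Sum>k<11. of_int (dd!k) * (if N < 3*k then 0 else A$(N-3*k)))
          = (\<Sum>k<11. of_int (if q < k then 0 else dd ! k * int (a (q - k))) :: rat)"
      proof (rule sum.cong[OF refl])
        fix k
        have e: "N - 3*k = 3 * (q - k)" using N by (simp add: diff_mult_distrib2)
        have "A $ (N - 3*k) = of_nat (a (q - k))" unfolding A_def e by (simp add: T333_eq)
        then show "of_int (dd!k) * (if N < 3*k then 0 else A$(N-3*k))
          = (of_int (if q < k then 0 else dd ! k * int (a (q - k))) :: rat)" using N by auto
      qed
      also have "\<dots> = of_int (\<Sum>k<11. if q < k then 0 else dd ! k * int (a (q - k)))"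
        by (simp only: of_int_sum)
      also have "\<dots> = of_int (if q < 8 then nn ! q else 0)" by (simp only: conv)
      also have "\<dots> = Num $ N" using rhs True q_def by simp
      finally show ?thesis using lhs by simp
    next
      case False
      have "(\<Sum>k<11. of_int (dd!k) * (if N < 3*k then 0 else A$(N-3*k))) = (\<Sum>k<(11::nat). (0::rat))"
      proof (rule sum.cong[OF refl])
        fix k
        have "\<not> 3 dvd (N - 3*k)" if "\<not> N < 3*k"
          using False that by (metis dvd_diff_nat dvd_triv_left le_add_diff_inverse not_less dvd_add_right_iff dvd_eq_mod_eq_0)
        then show "of_int (dd!k) * (if N < 3*k then 0 else A$(N-3*k)) = (0::rat)"
          unfolding A_def by (auto simp: T333_eq)
      qed
      then show ?thesis using lhs rhs False by simp
    qed
  qed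
  have D0: "D $ 0 \<noteq> 0" unfolding D_def by (simp add: numeral_fps_const)
  have "Num / ((1 - fps_X^3) * (1 - 2*fps_X^3 - 2*fps_X^6 - 15*fps_X^9 - 17*fps_X^12 - 6*fps_X^15
        + fps_X^18 - 3*fps_X^21 - fps_X^27)) = Num / D" unfolding D_def den_expand ..
  also have "\<dots> = Num * inverse D" by (rule fps_divide_unit[OF D0])
  also have "\<dots> = A * (D * inverse D)" unfolding AD[symmetric] by (simp add: mult.assoc)
  also have "\<dots> = A" using inverse_mult_eq_1'[OF D0] by simp
  finally show ?thesis unfolding A_def Num_def by simp
qed


end
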